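(* Let $G=\{g_1,\dots,g_m\}$ be a finite group and let $\Gamma=(V,E)$ be a finite digraph (loops and multiple arcs allowed) with a voltage assignment $\alpha:E\to G$. Let $B_G$ be the $G$-representation matrix of $(\Gamma,\alpha)$, and define its powers by $B_G^{0}$ with $(B_G^0)_{uv}=\delta_{uv}e_1$ where $g_1$ is the identity and $e_1$ the corresponding unit vector, and $(B_G^{\ell+1})_{uv}=\sum_{w\in V}(B_G^{\ell})_{uw}\ast_G (B_G)_{wv}$. If $(B_G^\ell)_{uv}=(\beta_1,\dots,\beta_m)$, then for every $i=1,\dots,m$ and every $h\in G$ there are exactly $\beta_i$ walks of length $\ell$ in the lift $\Gamma^\alpha$ from vertex $(u,h)$ to vertex $(v,hg_i)$.
   Context: The lift $\Gamma^\alpha$ has vertex set $V\times G$, and for each arc $uv\in E$ and $g\in G$ an arc from $(u,g)$ to $(v,g\alpha(uv))$. For $a,b\in\mathbb{N}^m$ (indexed by the elements of $G$), their $G$-convolution is $a\ast_G b\in\mathbb{N}^m$ with $(a\ast_G b)_i=\sum_{j,k:\,g_jg_k=g_i}a_jb_k$. The $G$-representation matrix $B_G$ is the $V\times V$ matrix whose $uv$-entry is the vector $b_{uv}\in\mathbb{N}^m$ with $(b_{uv})_i$ equal to the number of arcs from $u$ to $v$ with voltage $g_i$. *)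

theory Defs
  imports "HOL-Algebra.Group" "Graph_Theory.Digraph" "Graph_Theory.Arc_Walk"
begin

text \<open>Vectors in N^m indexed by the elements of the group G are functions
  from the carrier of G to nat.\<close>

definition gconv :: "('g, 'b) monoid_scheme \<Rightarrow> ('g \<Rightarrow> nat) \<Rightarrow> ('g \<Rightarrow> nat) \<Rightarrow> ('g \<Rightarrow> nat)" where
  "gconv G a b = (\<lambda>g. \<Sum>(j,k) \<in> {(j,k). j \<in> carrier G \<and> k \<in> carrier G \<and> j \<otimes>\<^bsub>G\<^esub> k = g}. a j * b k)"

definition rep_matrix :: "('v,'e) pre_digraph \<Rightarrow> ('e \<Rightarrow> 'g) \<Rightarrow> 'v \<Rightarrow> 'v \<Rightarrow> 'g \<Rightarrow> nat" where
  "rep_matrix \<Gamma> \<alpha> u v g = card {e \<in> arcs \<Gamma>. tail \<Gamma> e = u \<and> head \<Gamma> e = v \<and> \<alpha> e = g}"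

fun rep_matrix_pow :: "('g, 'b) monoid_scheme \<Rightarrow> ('v,'e) pre_digraph \<Rightarrow> ('e \<Rightarrow> 'g) \<Rightarrow> nat \<Rightarrow> 'v \<Rightarrow> 'v \<Rightarrow> 'g \<Rightarrow> nat" where
  "rep_matrix_pow G \<Gamma> \<alpha> 0 u v = (\<lambda>g. if u = v \<and> g = \<one>\<^bsub>G\<^esub> then 1 else 0)"
| "rep_matrix_pow G \<Gamma> \<alpha> (Suc l) u v =
     (\<lambda>g. \<Sum>w \<in> verts \<Gamma>. gconv G (rep_matrix_pow G \<Gamma> \<alpha> l u w) (rep_matrix \<Gamma> \<alpha> w v) g)"

definition lift :: "('g, 'b) monoid_scheme \<Rightarrow> ('v,'e) pre_digraph \<Rightarrow> ('e \<Rightarrow> 'g) \<Rightarrow> ('v \<times> 'g, 'e \<times> 'g) pre_digraph" where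
  "lift G \<Gamma> \<alpha> = \<lparr> verts = verts \<Gamma> \<times> carrier G, arcs = arcs \<Gamma> \<times> carrier G,
     tail = (\<lambda>(e,g). (tail \<Gamma> e, g)), head = (\<lambda>(e,g). (head \<Gamma> e, g \<otimes>\<^bsub>G\<^esub> \<alpha> e)) \<rparr>"

end

theory Submission
  imports Defs
begin

lemma cas_snoc:
  "pre_digraph.cas H x (p @ [a]) y \<longleftrightarrow> pre_digraph.cas H x p (tail H a) \<and> head H a = y"
  by (induction p arbitrary: x) (auto simp: pre_digraph.cas.simps)

lemma awalk_snoc:
  "pre_digraph.awalk H x (p @ [a]) y \<longleftrightarrow>
     pre_digraph.awalk H x p (tail H a) \<and> a \<in> arcs H \<and> head H a = y"
  by (auto simp: pre_digraph.awalk_def cas_snoc)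

lemma walks_finite:
  assumes "finite (arcs H)"
  shows "finite {p. pre_digraph.awalk H x p z \<and> length p = l}"
proof -
  have "{p. pre_digraph.awalk H x p z \<and> length p = l} \<subseteq> {p. set p \<subseteq> arcs H \<and> length p = l}"
    by (auto simp: pre_digraph.awalk_def)
  thus ?thesis using finite_lists_length_eq[OF assms] finite_subset by blast
qed

lemma walks_Suc:
  assumes "finite (arcs H)"
  shows "card {p. pre_digraph.awalk H x p z \<and> length p = Suc l}
    = (\<Sum>a\<in>{a \<in> arcs H. head H a = z}. card {p. pre_digraph.awalk H x p (tail H a) \<and> length p = l})"
proof -
  have eq: "{p. pre_digraph.awalk H x p z \<and> length p = Suc l}
    = (\<Union>a\<in>{a \<in> arcs H. head H a = z}. (\<lambda>p. p @ [a]) ` {p. pre_digraph.awalk H x p (tail H a) \<and> length p = l})"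
  proof (intro equalityI subsetI)
    fix q assume "q \<in> {p. pre_digraph.awalk H x p z \<and> length p = Suc l}"
    then have q: "pre_digraph.awalk H x q z" "length q = Suc l" by auto
    then obtain p a where "q = p @ [a]"
      by (metis length_Suc_conv_rev)
    with q show "q \<in> (\<Union>a\<in>{a \<in> arcs H. head H a = z}. (\<lambda>p. p @ [a]) ` {p. pre_digraph.awalk H x p (tail H a) \<and> length p = l})"
      by (auto simp: awalk_snoc)
  qed (auto simp: awalk_snoc)
  have fa: "finite {a \<in> arcs H. head H a = z}" using assms by auto
  have "card (\<Union>a\<in>{a \<in> arcs H. head H a = z}. (\<lambda>p. p @ [a]) ` {p. pre_digraph.awalk H x p (tail H a) \<and> length p = l})
     = (\<Sum>a\<in>{a \<in> arcs H. head H a = z}. card ((\<lambda>p. p @ [a]) ` {p. pre_digraph.awalk H x p (tail H a) \<and> length p = l}))"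
    by (rule card_UN_disjoint[OF fa]) (auto intro: walks_finite[OF assms])
  also have "\<dots> = (\<Sum>a\<in>{a \<in> arcs H. head H a = z}. card {p. pre_digraph.awalk H x p (tail H a) \<and> length p = l})"
    by (intro sum.cong refl card_image) (auto simp: inj_on_def)
  finally show ?thesis using eq by simp
qed

theorem lemma4p2:
  fixes G :: "('g, 'b) monoid_scheme" and \<Gamma> :: "('v,'e) pre_digraph" and \<alpha> :: "'e \<Rightarrow> 'g"
  assumes "group G" and "finite (carrier G)"
    and "fin_digraph \<Gamma>"
    and "\<And>e. e \<in> arcs \<Gamma> \<Longrightarrow> \<alpha> e \<in> carrier G"
    and "u \<in> verts \<Gamma>" and "v \<in> verts \<Gamma>"
    and "g \<in> carrier G" and "h \<in> carrier G"
  shows "card {p. pre_digraph.awalk (lift G \<Gamma> \<alpha>) (u, h) p (v, h \<otimes>\<^bsub>G\<^esub> g) \<and> length p = l}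
         = rep_matrix_pow G \<Gamma> \<alpha> l u v g"
  using assms(6,7)
proof (induction l arbitrary: v g)
  case 0
  interpret group G by fact
  have "(h \<otimes>\<^bsub>G\<^esub> g = h) \<longleftrightarrow> g = \<one>\<^bsub>G\<^esub>" using 0 assms(8)
    by (metis r_one l_cancel_one one_closed)
  moreover have "pre_digraph.awalk (lift G \<Gamma> \<alpha>) (u, h) p (v, h \<otimes>\<^bsub>G\<^esub> g) \<and> length p = 0
     \<longleftrightarrow> p = [] \<and> u = v \<and> h \<otimes>\<^bsub>G\<^esub> g = h" for p
    using 0 assms(5,8)
    by (auto simp: pre_digraph.awalk_def pre_digraph.cas.simps lift_def)
  ultimately show ?case using 0 assms(5,8)
    by (cases "u = v \<and> g = \<one>\<^bsub>G\<^esub>") auto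
next
  case (Suc l)
  interpret group G by fact
  interpret fin_digraph \<Gamma> by fact
  define L where "L = lift G \<Gamma> \<alpha>"
  define P where "P = (\<lambda>w k. card {p. pre_digraph.awalk L (u, h) p (w, h \<otimes>\<^bsub>G\<^esub> k) \<and> length p = l})"
  have IH: "\<And>w k. w \<in> verts \<Gamma> \<Longrightarrow> k \<in> carrier G \<Longrightarrow> P w k = rep_matrix_pow G \<Gamma> \<alpha> l u w k"
    using Suc.IH unfolding P_def L_def by blast
  have finL: "finite (arcs L)" using assms(2) by (simp add: L_def lift_def)
  define A where "A = {e \<in> arcs \<Gamma>. head \<Gamma> e = v}"
  have ha: "\<And>e. e \<in> arcs \<Gamma> \<Longrightarrow> inv\<^bsub>G\<^esub> (\<alpha> e) \<in> carrier G" using assms(4) by auto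
  have img: "{a \<in> arcs L. head L a = (v, h \<otimes>\<^bsub>G\<^esub> g)} = (\<lambda>e. (e, h \<otimes>\<^bsub>G\<^esub> g \<otimes>\<^bsub>G\<^esub> inv\<^bsub>G\<^esub> (\<alpha> e))) ` A"
  proof (intro equalityI subsetI)
    fix a assume a: "a \<in> {a \<in> arcs L. head L a = (v, h \<otimes>\<^bsub>G\<^esub> g)}"
    obtain e x where ex: "a = (e, x)" by force
    with a have e: "e \<in> arcs \<Gamma>" "x \<in> carrier G" "head \<Gamma> e = v" "x \<otimes>\<^bsub>G\<^esub> \<alpha> e = h \<otimes>\<^bsub>G\<^esub> g"
      by (auto simp: L_def lift_def)
    have "x = h \<otimes>\<^bsub>G\<^esub> g \<otimes>\<^bsub>G\<^esub> inv\<^bsub>G\<^esub> (\<alpha> e)"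
      using e assms(4)[OF e(1)] Suc.prems assms(8)
      by (metis inv_solve_right m_closed)
    with e ex show "a \<in> (\<lambda>e. (e, h \<otimes>\<^bsub>G\<^esub> g \<otimes>\<^bsub>G\<^esub> inv\<^bsub>G\<^esub> (\<alpha> e))) ` A" by (auto simp: A_def)
  next
    fix a assume "a \<in> (\<lambda>e. (e, h \<otimes>\<^bsub>G\<^esub> g \<otimes>\<^bsub>G\<^esub> inv\<^bsub>G\<^esub> (\<alpha> e))) ` A"
    then obtain e where e: "e \<in> arcs \<Gamma>" "head \<Gamma> e = v" "a = (e, h \<otimes>\<^bsub>G\<^esub> g \<otimes>\<^bsub>G\<^esub> inv\<^bsub>G\<^esub> (\<alpha> e))"
      by (auto simp: A_def)
    have "h \<otimes>\<^bsub>G\<^esub> g \<otimes>\<^bsub>G\<^esub> inv\<^bsub>G\<^esub> (\<alpha> e) \<otimes>\<^bsub>G\<^esub> \<alpha> e = h \<otimes>\<^bsub>G\<^esub> g"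
      using e assms(4)[OF e(1)] Suc.prems assms(8) by (simp add: m_assoc)
    then show "a \<in> {a \<in> arcs L. head L a = (v, h \<otimes>\<^bsub>G\<^esub> g)}"
      using e ha[OF e(1)] Suc.prems assms(8) by (auto simp: L_def lift_def)
  qed
  have "card {p. pre_digraph.awalk L (u, h) p (v, h \<otimes>\<^bsub>G\<^esub> g) \<and> length p = Suc l}
      = (\<Sum>a\<in>{a \<in> arcs L. head L a = (v, h \<otimes>\<^bsub>G\<^esub> g)}. card {p. pre_digraph.awalk L (u, h) p (tail L a) \<and> length p = l})"
    by (rule walks_Suc[OF finL])
  also have "\<dots> = (\<Sum>e\<in>A. card {p. pre_digraph.awalk L (u, h) p (tail L (e, h \<otimes>\<^bsub>G\<^esub> g \<otimes>\<^bsub>G\<^esub> inv\<^bsub>G\<^esub> (\<alpha> e))) \<and> length p = l})"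
    unfolding img by (subst sum.reindex) (auto simp: inj_on_def)
  also have "\<dots> = (\<Sum>e\<in>A. P (tail \<Gamma> e) (g \<otimes>\<^bsub>G\<^esub> inv\<^bsub>G\<^esub> (\<alpha> e)))"
    unfolding P_def
    using Suc.prems assms(8) ha by (intro sum.cong refl) (auto simp: L_def lift_def A_def m_assoc)
  finally have lhs: "card {p. pre_digraph.awalk L (u, h) p (v, h \<otimes>\<^bsub>G\<^esub> g) \<and> length p = Suc l}
      = (\<Sum>e\<in>A. P (tail \<Gamma> e) (g \<otimes>\<^bsub>G\<^esub> inv\<^bsub>G\<^esub> (\<alpha> e)))" .
  have finA: "finite A" by (simp add: A_def)
  have rhs_w: "gconv G (rep_matrix_pow G \<Gamma> \<alpha> l u w) (rep_matrix \<Gamma> \<alpha> w v) g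
      = (\<Sum>e\<in>{e \<in> A. tail \<Gamma> e = w}. P (tail \<Gamma> e) (g \<otimes>\<^bsub>G\<^esub> inv\<^bsub>G\<^esub> (\<alpha> e)))" if w: "w \<in> verts \<Gamma>" for w
  proof -
    define Aw where "Aw = {e \<in> A. tail \<Gamma> e = w}"
    have finAw: "finite Aw" using finA by (simp add: Aw_def)
    have pairs: "{(j,k). j \<in> carrier G \<and> k \<in> carrier G \<and> j \<otimes>\<^bsub>G\<^esub> k = g} = (\<lambda>k. (g \<otimes>\<^bsub>G\<^esub> inv\<^bsub>G\<^esub> k, k)) ` carrier G"
    proof (intro equalityI subsetI)
      fix x assume "x \<in> {(j,k). j \<in> carrier G \<and> k \<in> carrier G \<and> j \<otimes>\<^bsub>G\<^esub> k = g}"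
      then obtain j k where "x = (j,k)" "j \<in> carrier G" "k \<in> carrier G" "j \<otimes>\<^bsub>G\<^esub> k = g" by auto
      then show "x \<in> (\<lambda>k. (g \<otimes>\<^bsub>G\<^esub> inv\<^bsub>G\<^esub> k, k)) ` carrier G"
        by (auto intro!: image_eqI[where x=k] simp: inv_solve_right Suc.prems)
    next
      fix x assume "x \<in> (\<lambda>k. (g \<otimes>\<^bsub>G\<^esub> inv\<^bsub>G\<^esub> k, k)) ` carrier G"
      then show "x \<in> {(j,k). j \<in> carrier G \<and> k \<in> carrier G \<and> j \<otimes>\<^bsub>G\<^esub> k = g}"
        using Suc.prems by (auto simp: m_assoc)
    qed
    have "gconv G (rep_matrix_pow G \<Gamma> \<alpha> l u w) (rep_matrix \<Gamma> \<alpha> w v) g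
        = (\<Sum>k\<in>carrier G. rep_matrix_pow G \<Gamma> \<alpha> l u w (g \<otimes>\<^bsub>G\<^esub> inv\<^bsub>G\<^esub> k) * rep_matrix \<Gamma> \<alpha> w v k)"
      unfolding gconv_def pairs by (subst sum.reindex) (auto simp: inj_on_def)
    also have "\<dots> = (\<Sum>k\<in>carrier G. P w (g \<otimes>\<^bsub>G\<^esub> inv\<^bsub>G\<^esub> k) * card {e \<in> Aw. \<alpha> e = k})"
    proof (intro sum.cong refl)
      fix k assume k: "k \<in> carrier G"
      have "{e \<in> arcs \<Gamma>. tail \<Gamma> e = w \<and> head \<Gamma> e = v \<and> \<alpha> e = k} = {e \<in> Aw. \<alpha> e = k}"
        by (auto simp: Aw_def A_def)
      then show "rep_matrix_pow G \<Gamma> \<alpha> l u w (g \<otimes>\<^bsub>G\<^esub> inv\<^bsub>G\<^esub> k) * rep_matrix \<Gamma> \<alpha> w v k = P w (g \<otimes>\<^bsub>G\<^esub> inv\<^bsub>G\<^esub> k) * card {e \<in> Aw. \<alpha> e = k}"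
        using IH[OF w] k Suc.prems by (simp add: rep_matrix_def)
    qed
    also have "\<dots> = (\<Sum>k\<in>carrier G. \<Sum>e\<in>{e \<in> Aw. \<alpha> e = k}. P (tail \<Gamma> e) (g \<otimes>\<^bsub>G\<^esub> inv\<^bsub>G\<^esub> (\<alpha> e)))"
      by (intro sum.cong refl) (auto simp: Aw_def)
    also have "\<dots> = (\<Sum>e\<in>Aw. P (tail \<Gamma> e) (g \<otimes>\<^bsub>G\<^esub> inv\<^bsub>G\<^esub> (\<alpha> e)))"
      by (rule sum.group[OF finAw assms(2)]) (auto simp: Aw_def A_def assms(4))
    finally show ?thesis by (simp add: Aw_def)
  qed
  have "rep_matrix_pow G \<Gamma> \<alpha> (Suc l) u v g = (\<Sum>w\<in>verts \<Gamma>. \<Sum>e\<in>{e \<in> A. tail \<Gamma> e = w}. P (tail \<Gamma> e) (g \<otimes>\<^bsub>G\<^esub> inv\<^bsub>G\<^esub> (\<alpha> e)))"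
    using rhs_w by simp
  also have "\<dots> = (\<Sum>e\<in>A. P (tail \<Gamma> e) (g \<otimes>\<^bsub>G\<^esub> inv\<^bsub>G\<^esub> (\<alpha> e)))"
    by (rule sum.group[OF finA finite_verts]) (auto simp: A_def)
  finally show ?case using lhs by (simp add: L_def)
qed

end
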